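(* Let $\mathcal{B}^*$ be the three-receiver unicast index coding problem described in the context, with equivalent single unicast side information graph $G^*$ and underlying undirected graph $G^*_u$. Then $$\beta^*_{\mathcal{B}^*}(1)=\bar{\chi}_f(G^*_u)=\bar{\chi}(G^*_u)=7,$$ where $\bar{\chi}_f$ and $\bar{\chi}$ denote the fractional clique cover number and the clique cover number, respectively.
   Context: Index coding model. A unicast index coding problem has $n$ receivers $u_1,\dots,u_n$ and $N$ messages $\mathbf{x}_1,\dots,\mathbf{x}_N$, each a vector in $\mathcal{A}^m$ for a finite alphabet $\mathcal{A}$ and a positive integer $m$ (the message length; all messages have the same length). Receiver $u_i$ demands $\mathbf{x}_j$, $j\in W_i$, and knows $\mathbf{x}_j$, $j\in K_i$, as side information, where $W_i,K_i\subseteq[N]$, $W_i\cap K_i=\emptyset$, the $W_i$ are pairwise disjoint and every message is demanded by exactly one receiver. An index code consists of an encoder mapping $(\mathbf{x}_1,\dots,\mathbf{x}_N)$ to a codeword $\mathbf{c}\in\mathcal{A}^\ell$, subsets $R_i\subseteq[\ell]$ (receiver $u_i$ observes only $\mathbf{c}_{R_i}$), and decoders at each $u_i$ mapping $(\mathbf{c}_{R_i},\mathbf{x}_{K_i})$ to $\mathbf{x}_{W_i}$. It is valid if every receiver decodes its demand correctly for all message values. Its broadcast rate is $\beta=\ell/m$. The locality at $u_i$ is $r_i=|R_i|/(m|W_i|)$ and the locality of the code is $r=\max_i r_i$. For a problem $\mathcal{B}$, $\beta^*_{\mathcal{B}}(r)$ is the infimum of broadcast rates of all valid index codes, over all message lengths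 $m\ge1$, with locality at most $r$. The problem $\mathcal{B}^*$: three receivers $u_1,u_2,u_3$ and 12 messages with $W_1=\{1,2,3,4\}$, $W_2=\{5,6,7,8\}$, $W_3=\{9,10,11,12\}$, $K_1=\{5,6,9,10\}$, $K_2=\{1,2,9,11\}$, $K_3=\{1,3,5,7\}$. $G^*$ is the directed graph on $[12]$ with a directed edge $(a,b)$ iff $b\in K_i$ where $a\in W_i$. $G^*_u$ is the undirected graph on $[12]$ with $\{a,b\}$ an edge iff both $(a,b)$ and $(b,a)$ are edges of $G^*$. *)

theory Defs
  imports Complex_Main
begin

text \<open>A problem has receivers 1..n and messages 1..N; receiver i demands the messages
  in W i and knows the messages in K i.\<close>

definition msgs :: "'a set \<Rightarrow> nat \<Rightarrow> nat \<Rightarrow> (nat \<Rightarrow> 'a list) set" where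
  "msgs A N m = {x. \<forall>j. (j \<in> {1..N} \<longrightarrow> length (x j) = m \<and> set (x j) \<subseteq> A)
                       \<and> (j \<notin> {1..N} \<longrightarrow> x j = [])}"

definition restrict_msgs :: "(nat \<Rightarrow> 'a list) \<Rightarrow> nat set \<Rightarrow> nat \<Rightarrow> 'a list" where
  "restrict_msgs x S = (\<lambda>j. if j \<in> S then x j else [])"

text \<open>An index code: encoder E producing a codeword of length l over A, observed
  positions R i \<subseteq> {0..<l} (the positions of the codeword, 0-based) for receiver i,
  and decoders D i that map (c restricted to R i, side information) to the demanded
  messages.\<close>
definition valid_index_code ::
  "'a set \<Rightarrow> nat \<Rightarrow> nat \<Rightarrow> (nat \<Rightarrow> nat set) \<Rightarrow> (nat \<Rightarrow> nat set) \<Rightarrow> nat \<Rightarrow> nat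
   \<Rightarrow> ((nat \<Rightarrow> 'a list) \<Rightarrow> 'a list) \<Rightarrow> (nat \<Rightarrow> nat set)
   \<Rightarrow> (nat \<Rightarrow> 'a list \<Rightarrow> (nat \<Rightarrow> 'a list) \<Rightarrow> nat \<Rightarrow> 'a list) \<Rightarrow> bool" where
  "valid_index_code A n N W K m l E R D \<longleftrightarrow>
     (\<forall>x\<in>msgs A N m. length (E x) = l \<and> set (E x) \<subseteq> A) \<and>
     (\<forall>i\<in>{1..n}. R i \<subseteq> {0..<l}) \<and>
     (\<forall>i\<in>{1..n}. \<forall>x\<in>msgs A N m. \<forall>j\<in>W i.
        D i (nths (E x) (R i)) (restrict_msgs x (K i)) j = x j)"

definition locality_at :: "nat \<Rightarrow> (nat \<Rightarrow> nat set) \<Rightarrow> (nat \<Rightarrow> nat set) \<Rightarrow> nat \<Rightarrow> real" where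
  "locality_at m W R i = real (card (R i)) / (real m * real (card (W i)))"

definition beta_star ::
  "'a set \<Rightarrow> nat \<Rightarrow> nat \<Rightarrow> (nat \<Rightarrow> nat set) \<Rightarrow> (nat \<Rightarrow> nat set) \<Rightarrow> real \<Rightarrow> real" where
  "beta_star A n N W K r = Inf {real l / real m | m l E R D.
      m \<ge> 1 \<and> valid_index_code A n N W K m l E R D \<and>
      (\<forall>i\<in>{1..n}. locality_at m W R i \<le> r)}"

definition is_clique :: "'v set \<Rightarrow> ('v \<Rightarrow> 'v \<Rightarrow> bool) \<Rightarrow> 'v set \<Rightarrow> bool" where
  "is_clique V Adj C \<longleftrightarrow> C \<subseteq> V \<and> C \<noteq> {} \<and> (\<forall>a\<in>C. \<forall>b\<in>C. a \<noteq> b \<longrightarrow> Adj a b)"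

definition clique_cover_number :: "'v set \<Rightarrow> ('v \<Rightarrow> 'v \<Rightarrow> bool) \<Rightarrow> nat" where
  "clique_cover_number V Adj = (LEAST k. \<exists>\<C>. finite \<C> \<and> card \<C> = k \<and>
      (\<forall>C\<in>\<C>. is_clique V Adj C) \<and> \<Union>\<C> = V)"

definition frac_clique_cover_number :: "'v set \<Rightarrow> ('v \<Rightarrow> 'v \<Rightarrow> bool) \<Rightarrow> real" where
  "frac_clique_cover_number V Adj = Inf {(\<Sum>C\<in>{C. is_clique V Adj C}. w C) | w.
      (\<forall>C. w C \<ge> 0) \<and> (\<forall>v\<in>V. (\<Sum>C\<in>{C. is_clique V Adj C \<and> v \<in> C}. w C) \<ge> 1)}"

definition Wstar :: "nat \<Rightarrow> nat set" where
  "Wstar i = (if i = 1 then {1,2,3,4} else if i = 2 then {5,6,7,8}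
              else if i = 3 then {9,10,11,12} else {})"

definition Kstar :: "nat \<Rightarrow> nat set" where
  "Kstar i = (if i = 1 then {5,6,9,10} else if i = 2 then {1,2,9,11}
              else if i = 3 then {1,3,5,7} else {})"

definition Gstar_edge :: "nat \<Rightarrow> nat \<Rightarrow> bool" where
  "Gstar_edge a b \<longleftrightarrow> (\<exists>i\<in>{1..3::nat}. a \<in> Wstar i \<and> b \<in> Kstar i)"

definition Gstar_u_adj :: "nat \<Rightarrow> nat \<Rightarrow> bool" where
  "Gstar_u_adj a b \<longleftrightarrow> Gstar_edge a b \<and> Gstar_edge b a"

end

theory Submission
  imports Defs "HOL-Library.FuncSet"
begin


lemma nths_eq_iff_pos:
  assumes "length xs = length ys" "S \<subseteq> {0..<length xs}"
  shows "nths xs S = nths ys S \<longleftrightarrow> (\<forall>p\<in>S. xs!p = ys!p)"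
proof -
  have rep: "nths zs S = map (\<lambda>i. zs!i) (nths [0..<length xs] S)" if "length zs = length xs" for zs
  proof -
    have "zs = map (\<lambda>i. zs!i) [0..<length xs]" using that map_nth[of zs] by simp
    hence "nths zs S = nths (map (\<lambda>i. zs!i) [0..<length xs]) S" by simp
    thus ?thesis by (simp add: nths_map)
  qed
  have st: "set (nths [0..<length xs] S) = S"
  proof -
    have "set (nths [0..<length xs] S) = {[0..<length xs] ! i |i. i < length xs \<and> i \<in> S}"
      by (simp add: set_nths)
    also have "\<dots> = {i. i < length xs \<and> i \<in> S}" by force
    also have "\<dots> = S" using assms(2) by auto
    finally show ?thesis .
  qed
  show ?thesis using rep[of xs] rep[of ys] assms(1) st
    by (simp add: map_eq_conv)
qed

definition dep :: "(nat \<Rightarrow> 'a list) set \<Rightarrow> ((nat \<Rightarrow> 'a list) \<Rightarrow> 'a list) \<Rightarrow> nat \<Rightarrow> nat set \<Rightarrow> bool" where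
  "dep U E p S \<longleftrightarrow> (\<forall>x\<in>U. \<forall>x'\<in>U. (\<forall>j\<in>S. x j = x' j) \<longrightarrow> E x ! p = E x' ! p)"

lemma dep_mono: "dep U E p S \<Longrightarrow> S \<subseteq> S' \<Longrightarrow> dep U E p S'"
  unfolding dep_def by blast

lemma depD0: "dep U' E' p S \<Longrightarrow> x \<in> U' \<Longrightarrow> x' \<in> U' \<Longrightarrow> \<forall>j\<in>S. x j = x' j \<Longrightarrow> E' x ! p = E' x' ! p"
  unfolding dep_def by blast

lemma dep_inter:
  assumes "dep (msgs A N m) E p S" "dep (msgs A N m) E p S'"
  shows "dep (msgs A N m) E p (S \<inter> S')"
  unfolding dep_def
proof (intro ballI impI)
  fix x x' assume x: "x \<in> msgs A N m" and x': "x' \<in> msgs A N m" and ag: "\<forall>j\<in>S \<inter> S'. x j = x' j"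
  define z where "z = (\<lambda>j. if j \<in> S then x j else x' j)"
  have z: "z \<in> msgs A N m" using x x' unfolding msgs_def z_def by auto
  have a1: "\<forall>j\<in>S. z j = x j" unfolding z_def by simp
  have a2: "\<forall>j\<in>S'. z j = x' j" unfolding z_def using ag by auto
  have "E z ! p = E x ! p" using depD0[OF assms(1) z x a1] .
  moreover have "E z ! p = E x' ! p" using depD0[OF assms(2) z x' a2] .
  ultimately show "E x ! p = E x' ! p" by simp
qed

locale recv =
  fixes A :: "'a set" and N m l :: nat and E :: "(nat \<Rightarrow> 'a list) \<Rightarrow> 'a list" and R :: "nat set"
    and D :: "'a list \<Rightarrow> (nat \<Rightarrow> 'a list) \<Rightarrow> nat \<Rightarrow> 'a list" and W K :: "nat set"
  assumes finA: "finite A" and cardA: "card A \<ge> 2"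
  and Elen: "\<And>x. x \<in> msgs A N m \<Longrightarrow> length (E x) = l \<and> set (E x) \<subseteq> A"
  and Rsub: "R \<subseteq> {0..<l}"
  and decd: "\<And>x j. x \<in> msgs A N m \<Longrightarrow> j \<in> W \<Longrightarrow> D (nths (E x) R) (restrict_msgs x K) j = x j"
  and WN: "W \<subseteq> {1..N}" and WK: "W \<inter> K = {}"
begin

definition "Lm = {xs. set xs \<subseteq> A \<and> length xs = m}"
definition "U = msgs A N m"
definition "V x = (\<lambda>f j. if j \<in> W then f j else x j) ` PiE W (\<lambda>_. Lm)"
definition "phi y = nths (E y) R"
definition "LL r = {xs. set xs \<subseteq> A \<and> length xs = r}"

lemma finW: "finite W" using WN finite_subset by blast

lemma V_props: assumes "x \<in> U" "y \<in> V x" shows "y \<in> U" "\<And>j. j \<notin> W \<Longrightarrow> y j = x j"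
proof -
  obtain f where f: "f \<in> PiE W (\<lambda>_. Lm)" and y: "y = (\<lambda>j. if j \<in> W then f j else x j)"
    using assms(2) unfolding V_def by blast
  show "y \<in> U" using assms(1) f WN unfolding U_def msgs_def y Lm_def by (auto simp: PiE_iff)
  show "\<And>j. j \<notin> W \<Longrightarrow> y j = x j" using y by simp
qed

lemma in_V: assumes "x \<in> U" "y \<in> U" "\<And>j. j \<notin> W \<Longrightarrow> y j = x j" shows "y \<in> V x"
proof -
  have "restrict y W \<in> PiE W (\<lambda>_. Lm)" using assms(2) WN unfolding U_def msgs_def Lm_def by (force simp: subset_iff)
  moreover have "y = (\<lambda>j. if j \<in> W then restrict y W j else x j)" using assms(3) by auto
  ultimately show ?thesis unfolding V_def by blast
qed

lemma card_V: "card (V x) = (card A ^ m) ^ card W"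
proof -
  have "inj_on (\<lambda>f j. if j \<in> W then f j else x j) (PiE W (\<lambda>_. Lm))"
  proof (rule inj_onI)
    fix f g assume f: "f \<in> PiE W (\<lambda>_. Lm)" and g: "g \<in> PiE W (\<lambda>_. Lm)"
      and e: "(\<lambda>j. if j \<in> W then f j else x j) = (\<lambda>j. if j \<in> W then g j else x j)"
    show "f = g"
    proof
      fix j show "f j = g j"
      proof (cases "j \<in> W")
        case True then show ?thesis using fun_cong[OF e, of j] by simp
      next
        case False then show ?thesis using PiE_arb[OF f False] PiE_arb[OF g False] by simp
      qed
    qed
  qed
  hence "card (V x) = card (PiE W (\<lambda>_. Lm))" unfolding V_def by (rule card_image)
  also have "\<dots> = (\<Prod>i\<in>W. card Lm)" by (rule card_PiE[OF finW])
  also have "\<dots> = card Lm ^ card W" by simp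
  also have "card Lm = card A ^ m" unfolding Lm_def by (rule card_lists_length_eq[OF finA])
  finally show ?thesis .
qed

lemma restrict_eq: assumes "x \<in> U" "y1 \<in> V x" "y2 \<in> V x"
  shows "restrict_msgs y1 K = restrict_msgs y2 K"
proof
  fix j show "restrict_msgs y1 K j = restrict_msgs y2 K j"
  proof (cases "j \<in> K")
    case True then have "j \<notin> W" using WK by blast
    then show ?thesis using V_props(2)[OF assms(1,2)] V_props(2)[OF assms(1,3)] unfolding restrict_msgs_def by simp
  qed (simp add: restrict_msgs_def)
qed

lemma phi_inj: assumes "x \<in> U" shows "inj_on phi (V x)"
proof (rule inj_onI)
  fix y1 y2 assume y1: "y1 \<in> V x" and y2: "y2 \<in> V x" and e: "phi y1 = phi y2"
  have r: "restrict_msgs y1 K = restrict_msgs y2 K" by (rule restrict_eq[OF assms y1 y2])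
  show "y1 = y2"
  proof
    fix j show "y1 j = y2 j"
    proof (cases "j \<in> W")
      case True
      have "y1 j = D (phi y1) (restrict_msgs y1 K) j"
        using decd[OF V_props(1)[OF assms y1, unfolded U_def] True] unfolding phi_def by simp
      also have "\<dots> = D (phi y2) (restrict_msgs y2 K) j" using e r by simp
      also have "\<dots> = y2 j"
        using decd[OF V_props(1)[OF assms y2, unfolded U_def] True] unfolding phi_def by simp
      finally show ?thesis .
    next
      case False then show ?thesis using V_props(2)[OF assms y1] V_props(2)[OF assms y2] by simp
    qed
  qed
qed

lemma len_nths: "y \<in> U \<Longrightarrow> S \<subseteq> R \<Longrightarrow> length (nths (E y) S) = card S"
proof -
  assume y: "y \<in> U" and S: "S \<subseteq> R"
  have "{i. i < length (E y) \<and> i \<in> S} = S" using Elen[of y] y Rsub S unfolding U_def by auto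
  thus ?thesis by (simp add: length_nths)
qed

lemma nths_LL: "y \<in> U \<Longrightarrow> S \<subseteq> R \<Longrightarrow> nths (E y) S \<in> LL (card S)"
  using len_nths[of y S] Elen[of y] set_nths_subset[of "E y" S] unfolding LL_def U_def by auto

lemma finLL: "finite (LL r)" unfolding LL_def using finite_lists_length_eq[OF finA] by simp
lemma cardLL: "card (LL r) = card A ^ r" unfolding LL_def using card_lists_length_eq[OF finA] by simp

lemma q1: "1 < card A" using cardA by simp

lemma phi_sub: assumes "x \<in> U" shows "phi ` V x \<subseteq> LL (card R)"
proof
  fix t assume "t \<in> phi ` V x"
  then obtain y where y: "y \<in> V x" and t: "t = phi y" by blast
  show "t \<in> LL (card R)" unfolding t phi_def using nths_LL[OF V_props(1)[OF assms y] order_refl] .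
qed

lemma card_R_ge: assumes "x \<in> U" shows "m * card W \<le> card R"
proof -
  have "card A ^ (m * card W) = card (V x)" by (simp add: card_V power_mult)
  also have "\<dots> = card (phi ` V x)" using card_image[OF phi_inj[OF assms]] by simp
  also have "\<dots> \<le> card (LL (card R))" by (rule card_mono[OF finLL phi_sub[OF assms]])
  also have "\<dots> = card A ^ card R" by (rule cardLL)
  finally show ?thesis by (rule power_le_imp_le_exp[OF q1])
qed

lemma dep_WK: assumes loc: "card R \<le> m * card W" and p: "p \<in> R"
  shows "dep U E p (W \<union> K)"
  unfolding dep_def
proof (intro ballI impI)
  fix x x' assume x: "x \<in> U" and x': "x' \<in> U" and ag: "\<forall>j\<in>W \<union> K. x j = x' j"
  have sub: "phi ` V x' \<subseteq> LL (card R)" by (rule phi_sub[OF x'])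
  have "card (LL (card R)) \<le> card (phi ` V x')"
  proof -
    have "card (LL (card R)) = card A ^ card R" by (rule cardLL)
    also have "\<dots> \<le> card A ^ (m * card W)" using loc q1 by (intro power_increasing) simp_all
    also have "\<dots> = card (V x')" by (simp add: card_V power_mult)
    also have "\<dots> = card (phi ` V x')" using card_image[OF phi_inj[OF x']] by simp
    finally show ?thesis .
  qed
  hence eq: "phi ` V x' = LL (card R)" using card_seteq[OF finLL sub] by simp
  have "phi x \<in> LL (card R)" using nths_LL[OF x order_refl] unfolding phi_def .
  hence "phi x \<in> phi ` V x'" using eq by simp
  then obtain z where z: "z \<in> V x'" and pz: "phi x = phi z" by (rule imageE)
  have zU: "z \<in> U" using V_props(1)[OF x' z] .
  have rz: "restrict_msgs z K = restrict_msgs x K"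
  proof
    fix j show "restrict_msgs z K j = restrict_msgs x K j"
    proof (cases "j \<in> K")
      case True
      then have "j \<notin> W" using WK by blast
      then have "z j = x' j" using V_props(2)[OF x' z] by simp
      moreover have "x j = x' j" using ag True by simp
      ultimately show ?thesis unfolding restrict_msgs_def by simp
    qed (simp add: restrict_msgs_def)
  qed
  have "z = x'"
  proof
    fix j show "z j = x' j"
    proof (cases "j \<in> W")
      case True
      have "z j = D (phi z) (restrict_msgs z K) j"
        using decd[OF zU[unfolded U_def] True] unfolding phi_def by simp
      also have "\<dots> = D (phi x) (restrict_msgs x K) j" using pz rz by simp
      also have "\<dots> = x j" using decd[OF x[unfolded U_def] True] unfolding phi_def by simp
      finally show ?thesis using ag True by simp
    next
      case False then show ?thesis using V_props(2)[OF x' z] by simp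
    qed
  qed
  hence nn: "nths (E x) R = nths (E x') R" using pz unfolding phi_def by simp
  have l1: "length (E x) = length (E x')" using Elen[of x] Elen[of x'] x x' unfolding U_def by simp
  have l2: "R \<subseteq> {0..<length (E x)}" using Elen[of x] x Rsub unfolding U_def by simp
  have "\<forall>q\<in>R. E x ! q = E x' ! q" using nths_eq_iff_pos[OF l1 l2] nn by simp
  thus "E x ! p = E x' ! p" using p by blast
qed

lemma depD: "dep U' E' p S \<Longrightarrow> x \<in> U' \<Longrightarrow> x' \<in> U' \<Longrightarrow> \<forall>j\<in>S. x j = x' j \<Longrightarrow> E' x ! p = E' x' ! p"
  unfolding dep_def by blast

lemma count:
  assumes P: "P \<subseteq> R" and W': "W' \<subseteq> W" and dp: "\<forall>p\<in>P. dep U E p (- (W - W'))"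
    and x: "x \<in> U"
  shows "m * card W \<le> card (R - P) + m * card W'"
proof -
  define psi where "psi y = (nths (E y) (R - P), restrict y W')" for y
  have inj: "inj_on psi (V x)"
  proof (rule inj_onI)
    fix y1 y2 assume y1: "y1 \<in> V x" and y2: "y2 \<in> V x" and e: "psi y1 = psi y2"
    have u1: "y1 \<in> U" using V_props(1)[OF x y1] .
    have u2: "y2 \<in> U" using V_props(1)[OF x y2] .
    have rr: "restrict y1 W' = restrict y2 W'" and nn: "nths (E y1) (R - P) = nths (E y2) (R - P)"
      using e unfolding psi_def by simp_all
    have ag: "\<forall>j\<in>- (W - W'). y1 j = y2 j"
    proof
      fix j assume j: "j \<in> - (W - W')"
      show "y1 j = y2 j"
      proof (cases "j \<in> W'")
        case True then show ?thesis using fun_cong[OF rr, of j] by simp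
      next
        case False then have "j \<notin> W" using j by simp
        then show ?thesis using V_props(2)[OF x y1] V_props(2)[OF x y2] by simp
      qed
    qed
    have l12: "length (E y1) = length (E y2)" "length (E y1) = l"
      using Elen[of y1] Elen[of y2] u1 u2 unfolding U_def by auto
    have s1: "R - P \<subseteq> {0..<length (E y1)}" using Rsub l12 by auto
    have s2: "R \<subseteq> {0..<length (E y1)}" using Rsub l12 by auto
    have a1: "\<forall>p\<in>R - P. E y1 ! p = E y2 ! p"
      using nths_eq_iff_pos[OF l12(1) s1] nn by simp
    have a2: "\<forall>p\<in>P. E y1 ! p = E y2 ! p"
    proof
      fix p assume p: "p \<in> P"
      show "E y1 ! p = E y2 ! p" using depD[OF bspec[OF dp p] u1 u2 ag] .
    qed
    have "\<forall>p\<in>R. E y1 ! p = E y2 ! p" using a1 a2 by blast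
    hence "phi y1 = phi y2" unfolding phi_def using nths_eq_iff_pos[OF l12(1) s2] by simp
    thus "y1 = y2" using inj_onD[OF phi_inj[OF x] _ y1 y2] by simp
  qed
  have sub: "psi ` V x \<subseteq> LL (card (R - P)) \<times> PiE W' (\<lambda>_. Lm)"
  proof
    fix t assume "t \<in> psi ` V x"
    then obtain y where y: "y \<in> V x" and t: "t = psi y" by blast
    have yU: "y \<in> U" using V_props(1)[OF x y] .
    have RP: "R - P \<subseteq> R" by blast
    have "nths (E y) (R - P) \<in> LL (card (R - P))" using nths_LL[OF yU RP] .
    moreover have "restrict y W' \<in> PiE W' (\<lambda>_. Lm)"
    proof (rule restrict_PiE_iff[THEN iffD2], rule ballI)
      fix j assume "j \<in> W'"
      then have "j \<in> {1..N}" using W' WN by blast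
      then show "y j \<in> Lm" using yU unfolding U_def msgs_def Lm_def by blast
    qed
    ultimately show "t \<in> LL (card (R - P)) \<times> PiE W' (\<lambda>_. Lm)" unfolding t psi_def by simp
  qed
  have finW': "finite W'" using W' finW finite_subset by blast
  have finL: "finite Lm" unfolding Lm_def using finite_lists_length_eq[OF finA] by simp
  have finPi: "finite (PiE W' (\<lambda>_. Lm))" using finite_PiE[OF finW', of "\<lambda>_. Lm"] finL by blast
  have "card A ^ (m * card W) = card (V x)" by (simp add: card_V power_mult)
  also have "\<dots> = card (psi ` V x)" using card_image[OF inj] by simp
  also have "\<dots> \<le> card (LL (card (R - P)) \<times> PiE W' (\<lambda>_. Lm))"
    using finLL finPi by (intro card_mono[OF _ sub]) simp
  also have "\<dots> = card A ^ card (R - P) * (card A ^ m) ^ card W'"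
  proof -
    have cL: "card Lm = card A ^ m" unfolding Lm_def by (rule card_lists_length_eq[OF finA])
    have "card (PiE W' (\<lambda>_. Lm)) = (\<Prod>i\<in>W'. card Lm)" by (rule card_PiE[OF finW'])
    also have "\<dots> = (card A ^ m) ^ card W'" using cL by simp
    finally have "card (PiE W' (\<lambda>_. Lm)) = (card A ^ m) ^ card W'" .
    thus ?thesis by (simp add: card_cartesian_product cardLL)
  qed
  also have "\<dots> = card A ^ (card (R - P) + m * card W')" by (simp add: power_add power_mult)
  finally show ?thesis by (rule power_le_imp_le_exp[OF q1])
qed

lemma count_m:
  assumes "P \<subseteq> R" "W' \<subseteq> W" "\<forall>p\<in>P. dep (msgs A N m) E p (- (W - W'))" "x \<in> msgs A N m"
  shows "m * card W \<le> card (R - P) + m * card W'"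
  using count[of P W' x] assms unfolding U_def by blast

lemma card_R_ge_m: "x \<in> msgs A N m \<Longrightarrow> m * card W \<le> card R"
  using card_R_ge unfolding U_def by blast

lemma dep_WK_m: "card R \<le> m * card W \<Longrightarrow> p \<in> R \<Longrightarrow> dep (msgs A N m) E p (W \<union> K)"
  using dep_WK unfolding U_def by blast
end


lemma recv_i:
  assumes finA: "finite A" and cA: "card A \<ge> 2"
    and v: "valid_index_code A 3 12 Wstar Kstar m l E R D" and i: "i \<in> {1..3}"
  shows "recv A 12 m l E (R i) (D i) (Wstar i) (Kstar i)"
proof
  show "finite A" "2 \<le> card A" by fact+
  show "\<And>x. x \<in> msgs A 12 m \<Longrightarrow> length (E x) = l \<and> set (E x) \<subseteq> A"
    using v unfolding valid_index_code_def by blast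
  show "R i \<subseteq> {0..<l}" using v i unfolding valid_index_code_def by blast
  show "\<And>x j. x \<in> msgs A 12 m \<Longrightarrow> j \<in> Wstar i \<Longrightarrow> D i (nths (E x) (R i)) (restrict_msgs x (Kstar i)) j = x j"
    using v i unfolding valid_index_code_def by blast
  show "Wstar i \<subseteq> {1..12}" "Wstar i \<inter> Kstar i = {}" using i by (auto simp: Wstar_def Kstar_def)
qed

lemma card_W: "i \<in> {1..3} \<Longrightarrow> card (Wstar i) = 4"
  by (auto simp: Wstar_def)

lemma msgs_ne: "A \<noteq> {} \<Longrightarrow> msgs A N m \<noteq> {}"
proof -
  assume "A \<noteq> {}" then obtain a where a: "a \<in> A" by blast
  have "(\<lambda>j. if j \<in> {1..N} then replicate m a else []) \<in> msgs A N m"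
    using a unfolding msgs_def by auto
  thus ?thesis by blast
qed

lemma lower:
  assumes finA: "finite A" and cA: "card A \<ge> 2" and m: "m \<ge> 1"
    and v: "valid_index_code A 3 12 Wstar Kstar m l E R D"
    and loc: "\<forall>i\<in>{1..3}. locality_at m Wstar R i \<le> 1"
  shows "7 * m \<le> l"
proof -
  have rv: "recv A 12 m l E (R i) (D i) (Wstar i) (Kstar i)" if "i \<in> {1..3}" for i
    using recv_i[OF finA cA v that] .
  have cR: "card (R i) \<le> m * card (Wstar i)" if i: "i \<in> {1..3}" for i
  proof -
    have "locality_at m Wstar R i \<le> 1" using bspec[OF loc i] .
    hence "real (card (R i)) / (real m * real (card (Wstar i))) \<le> 1"
      unfolding locality_at_def .
    moreover have pos: "0 < real m * real (card (Wstar i))" using m card_W[OF i] by simp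
    ultimately have "real (card (R i)) \<le> 1 * (real m * real (card (Wstar i)))"
      using pos_divide_le_eq[OF pos] by blast
    hence "real (card (R i)) \<le> real (m * card (Wstar i))" by simp
    thus ?thesis by (simp only: of_nat_le_iff)
  qed
  have "A \<noteq> {}" using cA by (metis card.empty not_numeral_le_zero)
  hence "msgs A 12 m \<noteq> {}" by (rule msgs_ne)
  then obtain x where x: "x \<in> msgs A 12 m" by (meson ex_in_conv)
  have dp: "dep (msgs A 12 m) E p (Wstar i \<union> Kstar i)" if "i \<in> {1..3}" "p \<in> R i" for i p
    using recv.dep_WK_m[OF rv[OF that(1)] cR[OF that(1)] that(2)] .
  have i123: "(1::nat) \<in> {1..3}" "(2::nat) \<in> {1..3}" "(3::nat) \<in> {1..3}" by auto
  define P where "P = R 1 \<inter> (R 2 \<union> R 3)"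
  define P' where "P' = R 2 \<inter> R 3"
  have s12: "(Wstar 1 \<union> Kstar 1) \<inter> (Wstar 2 \<union> Kstar 2) \<subseteq> - (Wstar 1 - {1,2,3})"
    by (auto simp: Wstar_def Kstar_def)
  have s13: "(Wstar 1 \<union> Kstar 1) \<inter> (Wstar 3 \<union> Kstar 3) \<subseteq> - (Wstar 1 - {1,2,3})"
    by (auto simp: Wstar_def Kstar_def)
  have s23: "(Wstar 2 \<union> Kstar 2) \<inter> (Wstar 3 \<union> Kstar 3) \<subseteq> - (Wstar 2 - {5,7})"
    by (auto simp: Wstar_def Kstar_def)
  have dP: "\<forall>p\<in>P. dep (msgs A 12 m) E p (- (Wstar 1 - {1,2,3}))"
  proof
    fix p assume "p \<in> P"
    then have p1: "p \<in> R 1" and p23: "p \<in> R 2 \<or> p \<in> R 3" unfolding P_def by auto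
    show "dep (msgs A 12 m) E p (- (Wstar 1 - {1,2,3}))"
      using p23
    proof
      assume a: "p \<in> R 2"
      show ?thesis using dep_mono[OF dep_inter[OF dp[OF i123(1) p1] dp[OF i123(2) a]] s12] .
    next
      assume a: "p \<in> R 3"
      show ?thesis using dep_mono[OF dep_inter[OF dp[OF i123(1) p1] dp[OF i123(3) a]] s13] .
    qed
  qed
  have dP': "\<forall>p\<in>P'. dep (msgs A 12 m) E p (- (Wstar 2 - {5,7}))"
  proof
    fix p assume "p \<in> P'"
    then have a: "p \<in> R 2" "p \<in> R 3" unfolding P'_def by auto
    show "dep (msgs A 12 m) E p (- (Wstar 2 - {5,7}))"
      using dep_mono[OF dep_inter[OF dp[OF i123(2) a(1)] dp[OF i123(3) a(2)]] s23] .
  qed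
  have PR: "P \<subseteq> R 1" unfolding P_def by blast
  have PR': "P' \<subseteq> R 2" unfolding P'_def by blast
  have w1: "{1::nat,2,3} \<subseteq> Wstar 1" by (simp add: Wstar_def)
  have w2: "{5::nat,7} \<subseteq> Wstar 2" by (simp add: Wstar_def)
  have c1: "m * card (Wstar 1) \<le> card (R 1 - P) + m * card {1::nat,2,3}"
    by (rule recv.count_m[OF rv[OF i123(1)] PR w1 dP x])
  have c2: "m * card (Wstar 2) \<le> card (R 2 - P') + m * card {5::nat,7}"
    by (rule recv.count_m[OF rv[OF i123(2)] PR' w2 dP' x])
  have c3: "m * card (Wstar 3) \<le> card (R 3)"
    by (rule recv.card_R_ge_m[OF rv[OF i123(3)] x])
  have e1: "m \<le> card (R 1 - P)" using c1 card_W[OF i123(1)] by simp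
  have e2: "2 * m \<le> card (R 2 - P')" using c2 card_W[OF i123(2)] by simp
  have e3: "4 * m \<le> card (R 3)" using c3 card_W[OF i123(3)] by simp
  have Rl: "R i \<subseteq> {0..<l}" if "i \<in> {1..3}" for i using v that unfolding valid_index_code_def by blast
  have fin: "finite (R i)" if "i \<in> {1..3}" for i using Rl[OF that] finite_subset by blast
  have f1: "finite (R 1 - P)" using fin[OF i123(1)] by simp
  have f2: "finite (R 2 - P')" using fin[OF i123(2)] by simp
  have f3: "finite (R 3)" using fin[OF i123(3)] .
  have d1: "(R 1 - P) \<inter> (R 2 - P') = {}" unfolding P_def P'_def by blast
  have d2: "((R 1 - P) \<union> (R 2 - P')) \<inter> R 3 = {}" unfolding P_def P'_def by blast
  have "card ((R 1 - P) \<union> (R 2 - P') \<union> R 3) = card ((R 1 - P) \<union> (R 2 - P')) + card (R 3)"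
    using card_Un_disjoint[OF _ f3 d2] f1 f2 by simp
  also have "card ((R 1 - P) \<union> (R 2 - P')) = card (R 1 - P) + card (R 2 - P')"
    by (rule card_Un_disjoint[OF f1 f2 d1])
  finally have cu: "card ((R 1 - P) \<union> (R 2 - P') \<union> R 3) = card (R 1 - P) + card (R 2 - P') + card (R 3)" .
  have "(R 1 - P) \<union> (R 2 - P') \<union> R 3 \<subseteq> {0..<l}"
    using Rl[OF i123(1)] Rl[OF i123(2)] Rl[OF i123(3)] by blast
  from card_mono[OF _ this] have "card ((R 1 - P) \<union> (R 2 - P') \<union> R 3) \<le> l" by simp
  thus ?thesis using cu e1 e2 e3 by linarith
qed



lemma nths7:
  "nths [a0,a1,a2,a3,a4,a5,a6] {0,1,2,4} = [a0,a1,a2,a4]"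
  "nths [a0,a1,a2,a3,a4,a5,a6] {0,1,3,5} = [a0,a1,a3,a5]"
  "nths [a0,a1,a2,a3,a4,a5,a6] {0,2,3,6} = [a0,a2,a3,a6]"
  by (simp_all add: nths_Cons)

lemma upper:
  assumes finA: "finite A" and cA: "card A \<ge> 2"
  shows "\<exists>E R D. valid_index_code A 3 12 Wstar Kstar 1 7 E R D \<and> (\<forall>i\<in>{1..3}. locality_at 1 Wstar R i \<le> 1)"
proof -
  define q where "q = card A"
  obtain h where h: "bij_betw h A {0..<q}" using ex_bij_betw_finite_nat[OF finA] unfolding q_def by blast
  define dc where "dc = inv_into A h"
  have q0: "0 < q" using cA unfolding q_def by simp
  have hA: "a \<in> A \<Longrightarrow> h a < q" for a using h unfolding bij_betw_def by auto
  have dch: "a \<in> A \<Longrightarrow> dc (h a) = a" for a using h unfolding dc_def bij_betw_def by (simp add: inv_into_f_f)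
  have dcA: "n < q \<Longrightarrow> dc n \<in> A" for n using h unfolding dc_def bij_betw_def by (metis atLeastLessThan_iff inv_into_into zero_le)
  have hdc: "n < q \<Longrightarrow> h (dc n) = n" for n using h unfolding dc_def bij_betw_def by (metis atLeastLessThan_iff f_inv_into_f zero_le)
  define ad where "ad a b = dc (nat ((int (h a) + int (h b)) mod int q))" for a b
  define sb where "sb c b = dc (nat ((int (h c) - int (h b)) mod int q))" for c b
  have nq: "nat (z mod int q) < q" for z using q0 by (simp add: nat_less_iff)
  have adA: "ad a b \<in> A" for a b unfolding ad_def using dcA nq by blast
  have had: "int (h (ad a b)) = (int (h a) + int (h b)) mod int q" for a b
    unfolding ad_def using hdc[OF nq] q0 by simp
  have sbr: "sb (ad a b) b = a" if "a \<in> A" for a b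
  proof -
    have "(int (h (ad a b)) - int (h b)) mod int q = int (h a) mod int q"
      unfolding had by (simp add: mod_diff_left_eq)
    also have "\<dots> = int (h a)" using hA[OF that] by simp
    finally show ?thesis unfolding sb_def using dch[OF that] by simp
  qed
  have sbl: "sb (ad a b) a = b" if "b \<in> A" for a b
  proof -
    have "(int (h (ad a b)) - int (h a)) mod int q = int (h b) mod int q"
      unfolding had by (simp add: mod_diff_left_eq)
    also have "\<dots> = int (h b)" using hA[OF that] by simp
    finally show ?thesis unfolding sb_def using dch[OF that] by simp
  qed
  define E where "E x = (let v = (\<lambda>j. hd (x j)) in
     [ad (ad (v 1) (v 5)) (v 9), ad (v 2) (v 6), ad (v 3) (v 10), ad (v 7) (v 11), v 4, v 8, v 12])"
    for x :: "nat \<Rightarrow> 'a list"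
  define R where "R i = (if i = (1::nat) then {0,1,2,4} else if i = 2 then {0,1,3,5} else {0::nat,2,3,6})" for i
  define D where "D i ys k j = (let w = (\<lambda>j. hd (k j)) in
     if i = (1::nat) then
       (if j = (1::nat) then [sb (sb (ys!0) (w 9)) (w 5)] else if j = 2 then [sb (ys!1) (w 6)]
        else if j = 3 then [sb (ys!2) (w 10)] else [ys!3])
     else if i = 2 then
       (if j = 5 then [sb (sb (ys!0) (w 9)) (w 1)] else if j = 6 then [sb (ys!1) (w 2)]
        else if j = 7 then [sb (ys!2) (w 11)] else [ys!3])
     else
       (if j = 9 then [sb (ys!0) (ad (w 1) (w 5))] else if j = 10 then [sb (ys!1) (w 3)]
        else if j = 11 then [sb (ys!2) (w 7)] else [ys!3]))" for i ys and k :: "nat \<Rightarrow> 'a list" and j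
  have R1: "R 1 = {0,1,2,4}" and R2: "R 2 = {0,1,3,5}" and R3: "R 3 = {0,2,3,6}" unfolding R_def by simp_all
  note Rv = R1 R2 R3
  have vA: "hd (x j) \<in> A" "x j = [hd (x j)]" if "x \<in> msgs A 12 1" "j \<in> {1..12}" for x j
  proof -
    have "length (x j) = 1" "set (x j) \<subseteq> A" using that unfolding msgs_def by auto
    then show "hd (x j) \<in> A" "x j = [hd (x j)]" by (auto simp: length_Suc_conv)
  qed
  have valid: "valid_index_code A 3 12 Wstar Kstar 1 7 E R D"
    unfolding valid_index_code_def
  proof (intro conjI ballI)
    fix x assume x: "x \<in> msgs A 12 1"
    have "hd (x j) \<in> A" if "j \<in> {1..12}" for j using vA(1)[OF x that] .
    then show "length (E x) = 7" "set (E x) \<subseteq> A" unfolding E_def Let_def using adA by simp_all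
  next
    fix i :: nat assume "i \<in> {1..3}"
    then show "R i \<subseteq> {0..<7}" unfolding R_def by auto
  next
    fix i :: nat and x j assume i: "i \<in> {1..3}" and x: "x \<in> msgs A 12 1" and j: "j \<in> Wstar i"
    have v: "hd (x j) \<in> A" "x j = [hd (x j)]" if "j \<in> {1..12}" for j using vA[OF x that] by auto
    have rm: "restrict_msgs x (Kstar i) j' = x j'" if "j' \<in> Kstar i" for j' using that unfolding restrict_msgs_def by simp
    have vv: "hd (x j) \<in> A" if "j \<in> {1..12}" for j using v(1)[OF that] .
    have kk: "hd (restrict_msgs x (Kstar i) j') = hd (x j')" if "j' \<in> Kstar i" for j' using rm[OF that] by simp
    have jx: "x j = [hd (x j)]" using v(2) j i by (auto simp: Wstar_def split: if_splits)
    have "D i (nths (E x) (R i)) (restrict_msgs x (Kstar i)) j = [hd (x j)]"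
    proof -
      consider "i = 1" | "i = 2" | "i = 3" using i by force
      then show ?thesis
      proof cases
        case 1
        have e: "nths (E x) (R 1) = [ad (ad (hd (x 1)) (hd (x 5))) (hd (x 9)), ad (hd (x 2)) (hd (x 6)), ad (hd (x 3)) (hd (x 10)), hd (x 4)]"
          unfolding E_def Let_def by (simp only: Rv nths7)
        have k5: "hd (restrict_msgs x (Kstar 1) 5) = hd (x 5)" using kk[of 5] 1 by (simp add: Kstar_def)
        have k6: "hd (restrict_msgs x (Kstar 1) 6) = hd (x 6)" using kk[of 6] 1 by (simp add: Kstar_def)
        have k9: "hd (restrict_msgs x (Kstar 1) 9) = hd (x 9)" using kk[of 9] 1 by (simp add: Kstar_def)
        have k10: "hd (restrict_msgs x (Kstar 1) 10) = hd (x 10)" using kk[of 10] 1 by (simp add: Kstar_def)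
        have jj: "j = 1 \<or> j = 2 \<or> j = 3 \<or> j = 4" using j 1 by (simp add: Wstar_def)
        from jj show ?thesis unfolding 1 D_def Let_def e k5 k6 k9 k10
          by (elim disjE) (simp_all add: sbr sbl adA vv)
      next
        case 2
        have e: "nths (E x) (R 2) = [ad (ad (hd (x 1)) (hd (x 5))) (hd (x 9)), ad (hd (x 2)) (hd (x 6)), ad (hd (x 7)) (hd (x 11)), hd (x 8)]"
          unfolding E_def Let_def by (simp only: Rv nths7)
        have k1: "hd (restrict_msgs x (Kstar 2) 1) = hd (x 1)" using kk[of 1] 2 by (simp add: Kstar_def)
        have k2: "hd (restrict_msgs x (Kstar 2) 2) = hd (x 2)" using kk[of 2] 2 by (simp add: Kstar_def)
        have k9: "hd (restrict_msgs x (Kstar 2) 9) = hd (x 9)" using kk[of 9] 2 by (simp add: Kstar_def)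
        have k11: "hd (restrict_msgs x (Kstar 2) 11) = hd (x 11)" using kk[of 11] 2 by (simp add: Kstar_def)
        have jj: "j = 5 \<or> j = 6 \<or> j = 7 \<or> j = 8" using j 2 by (simp add: Wstar_def)
        from jj show ?thesis unfolding 2 D_def Let_def e k1 k2 k9 k11
          by (elim disjE) (simp_all add: sbr sbl adA vv)
      next
        case 3
        have e: "nths (E x) (R 3) = [ad (ad (hd (x 1)) (hd (x 5))) (hd (x 9)), ad (hd (x 3)) (hd (x 10)), ad (hd (x 7)) (hd (x 11)), hd (x 12)]"
          unfolding E_def Let_def by (simp only: Rv nths7)
        have k1: "hd (restrict_msgs x (Kstar 3) 1) = hd (x 1)" using kk[of 1] 3 by (simp add: Kstar_def)
        have k3: "hd (restrict_msgs x (Kstar 3) 3) = hd (x 3)" using kk[of 3] 3 by (simp add: Kstar_def)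
        have k5: "hd (restrict_msgs x (Kstar 3) 5) = hd (x 5)" using kk[of 5] 3 by (simp add: Kstar_def)
        have k7: "hd (restrict_msgs x (Kstar 3) 7) = hd (x 7)" using kk[of 7] 3 by (simp add: Kstar_def)
        have jj: "j = 9 \<or> j = 10 \<or> j = 11 \<or> j = 12" using j 3 by (simp add: Wstar_def)
        from jj show ?thesis unfolding 3 D_def Let_def e k1 k3 k5 k7
          by (elim disjE) (simp_all add: sbr sbl adA vv)
      qed
    qed
    then show "D i (nths (E x) (R i)) (restrict_msgs x (Kstar i)) j = x j" using jx by simp
  qed
  have loc: "\<forall>i\<in>{1..3}. locality_at 1 Wstar R i \<le> 1"
  proof
    fix i :: nat assume i: "i \<in> {1..3}"
    have "card (R i) = 4" unfolding R_def by simp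
    then show "locality_at 1 Wstar R i \<le> 1" unfolding locality_at_def using card_W[OF i] by simp
  qed
  show ?thesis using valid loc by blast
qed


lemma i12: "{1..12::nat} = {1,2,3,4,5,6,7,8,9,10,11,12}" by (auto simp: eval_nat_numeral le_Suc_eq)
lemma c7: "card {{1,5,9},{2,6},{3,10},{7,11},{4},{8},{12::nat}} = 7" by (simp add: insert_eq_iff)
lemma edge: "Gstar_edge a b \<longleftrightarrow> (a \<in> {1,2,3,4} \<and> b \<in> {5,6,9,10}) \<or> (a \<in> {5,6,7,8} \<and> b \<in> {1,2,9,11}) \<or> (a \<in> {9,10,11,12} \<and> b \<in> {1,3,5,7})"
proof -
  have "{1..3::nat} = {1,2,3}" by auto
  then show ?thesis unfolding Gstar_edge_def Wstar_def Kstar_def by simp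
qed
definition nbr :: "nat \<Rightarrow> nat set" where "nbr a = (if a=1 then {5,6,9,10} else if a=2 then {5,6} else if a=3 then {9,10} else if a=5 then {1,2,9,11} else if a=6 then {1,2} else if a=7 then {9,11} else if a=9 then {1,3,5,7} else if a=10 then {1,3} else if a=11 then {5,7} else {})"
lemma adj_eq: "Gstar_u_adj a b \<longleftrightarrow> b \<in> nbr a"
  unfolding Gstar_u_adj_def edge nbr_def by auto

lemma tri: "b \<in> nbr a \<Longrightarrow> c \<in> nbr a \<Longrightarrow> c \<in> nbr b \<Longrightarrow> {a,b,c} = {1,5,9}"
  unfolding nbr_def by (auto split: if_splits)

definition y :: "nat \<Rightarrow> real" where
  "y v = (if v \<in> {4,8,12} then 1 else if v \<in> {1,5,9} then 1/3 else if v \<in> {2,3,6,7,10,11} then 1/2 else 0)"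

lemma y_le1: "y v \<le> 1" unfolding y_def by simp
lemma y_nn: "0 \<le> y v" unfolding y_def by simp
lemma edge_sum: "b \<in> nbr a \<Longrightarrow> y a + y b \<le> 1"
  unfolding nbr_def y_def by (auto split: if_splits)
lemma y_sum: "(\<Sum>v\<in>{1..12}. y v) = 7"
  unfolding i12 by (simp add: y_def)

lemma clique_sum: assumes "is_clique {1..12} Gstar_u_adj C" shows "(\<Sum>v\<in>C. y v) \<le> 1"
proof -
  have ne: "C \<noteq> {}" using assms unfolding is_clique_def by simp
  have adj: "\<And>a b. a \<in> C \<Longrightarrow> b \<in> C \<Longrightarrow> a \<noteq> b \<Longrightarrow> b \<in> nbr a"
    using assms unfolding is_clique_def adj_eq by blast
  obtain a where a: "a \<in> C" using ne by blast
  show ?thesis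
  proof (cases "C = {a}")
    case True then show ?thesis by (simp add: y_le1)
  next
    case False
    then obtain b where b: "b \<in> C" "b \<noteq> a" using a by blast
    have ab: "b \<in> nbr a" using adj[OF a b(1)] b(2) by simp
    show ?thesis
    proof (cases "C = {a,b}")
      case True then show ?thesis using b(2) edge_sum[OF ab] by simp
    next
      case False
      then obtain c where c: "c \<in> C" "c \<noteq> a" "c \<noteq> b" using a b by blast
      have ac: "c \<in> nbr a" using adj[OF a c(1)] c(2) by simp
      have bc: "c \<in> nbr b" using adj[OF b(1) c(1)] c(3) by simp
      have T: "{a,b,c} = {1,5,9}" by (rule tri[OF ab ac bc])
      have "C = {a,b,c}"
      proof
        show "{a,b,c} \<subseteq> C" using a b c by blast
        show "C \<subseteq> {a,b,c}"
        proof
          fix d assume d: "d \<in> C"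
          show "d \<in> {a,b,c}"
          proof (rule ccontr)
            assume nd: "d \<notin> {a,b,c}"
            have ad: "d \<in> nbr a" using adj[OF a d] nd by auto
            have bd: "d \<in> nbr b" using adj[OF b(1) d] nd by auto
            have "{a,b,d} = {1,5,9}" by (rule tri[OF ab ad bd])
            then have "d \<in> {a,b,c}" using T by blast
            thus False using nd by blast
          qed
        qed
      qed
      hence "C = {1,5,9}" using T by simp
      then show ?thesis by (simp add: y_def)
    qed
  qed
qed

abbreviation "Cl \<equiv> {C. is_clique {1..12::nat} Gstar_u_adj C}"

lemma finCl: "finite Cl"
proof -
  have "Cl \<subseteq> Pow {1..12}" unfolding is_clique_def by blast
  thus ?thesis using finite_subset by blast
qed

lemma frac_lb:
  fixes w :: "nat set \<Rightarrow> real"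
  assumes w0: "\<forall>C. w C \<ge> 0"
    and cov: "\<forall>v\<in>{1..12::nat}. (\<Sum>C\<in>{C. is_clique {1..12} Gstar_u_adj C \<and> v \<in> C}. w C) \<ge> 1"
  shows "7 \<le> (\<Sum>C\<in>Cl. w C)"
proof -
  have "(7::real) = (\<Sum>v\<in>{1..12}. y v * 1)" using y_sum by simp
  also have "\<dots> \<le> (\<Sum>v\<in>{1..12}. y v * (\<Sum>C\<in>{C \<in> Cl. v \<in> C}. w C))"
  proof (rule sum_mono)
    fix v :: nat assume v: "v \<in> {1..12}"
    have "{C \<in> Cl. v \<in> C} = {C. is_clique {1..12} Gstar_u_adj C \<and> v \<in> C}" by simp
    then have "1 \<le> (\<Sum>C\<in>{C \<in> Cl. v \<in> C}. w C)" using cov v by simp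
    then show "y v * 1 \<le> y v * (\<Sum>C\<in>{C \<in> Cl. v \<in> C}. w C)" by (rule mult_left_mono[OF _ y_nn])
  qed
  also have "\<dots> = (\<Sum>v\<in>{1..12}. \<Sum>C\<in>{C. C \<in> Cl \<and> v \<in> C}. w C * y v)"
    by (simp add: sum_distrib_left mult.commute)
  also have "\<dots> = (\<Sum>C\<in>Cl. \<Sum>v\<in>{v. v \<in> {1..12} \<and> v \<in> C}. w C * y v)"
    by (rule sum.swap_restrict[symmetric]) (rule finCl, simp)
  also have "\<dots> = (\<Sum>C\<in>Cl. w C * (\<Sum>v\<in>C. y v))"
  proof (rule sum.cong[OF refl])
    fix C assume "C \<in> Cl"
    then have "C \<subseteq> {1..12}" unfolding is_clique_def by simp
    then have "{v. v \<in> {1..12} \<and> v \<in> C} = C" by blast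
    then show "(\<Sum>v\<in>{v. v \<in> {1..12} \<and> v \<in> C}. w C * y v) = w C * (\<Sum>v\<in>C. y v)"
      by (simp add: sum_distrib_left)
  qed
  also have "\<dots> \<le> (\<Sum>C\<in>Cl. w C)"
  proof (rule sum_mono)
    fix C assume "C \<in> Cl"
    then have "(\<Sum>v\<in>C. y v) \<le> 1" using clique_sum by simp
    then show "w C * (\<Sum>v\<in>C. y v) \<le> w C" using mult_left_le w0 by blast
  qed
  finally show ?thesis .
qed

lemma cover_feasible:
  assumes fin: "finite \<C>" and cl: "\<forall>C\<in>\<C>. is_clique {1..12::nat} Gstar_u_adj C" and un: "\<Union>\<C> = {1..12}"
  defines "w \<equiv> (\<lambda>C. if C \<in> \<C> then 1 else 0 :: real)"
  shows "\<forall>C. w C \<ge> 0"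
    and "\<forall>v\<in>{1..12::nat}. (\<Sum>C\<in>{C. is_clique {1..12} Gstar_u_adj C \<and> v \<in> C}. w C) \<ge> 1"
    and "(\<Sum>C\<in>Cl. w C) = real (card \<C>)"
proof -
  show "\<forall>C. w C \<ge> 0" unfolding w_def by simp
  show "\<forall>v\<in>{1..12::nat}. (\<Sum>C\<in>{C. is_clique {1..12} Gstar_u_adj C \<and> v \<in> C}. w C) \<ge> 1"
  proof
    fix v :: nat assume v: "v \<in> {1..12}"
    then obtain C0 where C0: "C0 \<in> \<C>" "v \<in> C0" using un by blast
    have finS: "finite {C. is_clique {1..12} Gstar_u_adj C \<and> v \<in> C}"
      using finCl by (rule finite_subset[rotated]) blast
    have inS: "C0 \<in> {C. is_clique {1..12} Gstar_u_adj C \<and> v \<in> C}" using C0 cl by blast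
    have "w C0 \<le> (\<Sum>C\<in>{C. is_clique {1..12} Gstar_u_adj C \<and> v \<in> C}. w C)"
      by (rule member_le_sum[OF inS _ finS]) (simp add: w_def)
    then show "(\<Sum>C\<in>{C. is_clique {1..12} Gstar_u_adj C \<and> v \<in> C}. w C) \<ge> 1"
      using C0 unfolding w_def by simp
  qed
  have sub: "\<C> \<subseteq> Cl" using cl by blast
  have "(\<Sum>C\<in>Cl. w C) = (\<Sum>C\<in>Cl \<inter> {C. C \<in> \<C>}. 1) + (\<Sum>C\<in>Cl \<inter> - {C. C \<in> \<C>}. 0)"
    unfolding w_def by (rule sum.If_cases[OF finCl])
  also have "Cl \<inter> {C. C \<in> \<C>} = \<C>" using sub by blast
  finally show "(\<Sum>C\<in>Cl. w C) = real (card \<C>)" by simp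
qed

definition "C0 = {{1,5,9},{2,6},{3,10},{7,11},{4},{8},{12::nat}}"

lemma C0_props: "finite C0" "card C0 = 7" "\<forall>C\<in>C0. is_clique {1..12::nat} Gstar_u_adj C" "\<Union>C0 = {1..12}"
proof -
  show "finite C0" unfolding C0_def by simp
  show "card C0 = 7" unfolding C0_def by (rule c7)
  show "\<forall>C\<in>C0. is_clique {1..12::nat} Gstar_u_adj C"
    unfolding C0_def is_clique_def adj_eq i12 by (simp add: nbr_def)
  show "\<Union>C0 = {1..12}" unfolding C0_def i12 by auto
qed

lemma frac7: "frac_clique_cover_number {1..12::nat} Gstar_u_adj = 7"
  unfolding frac_clique_cover_number_def
proof (rule cInf_eq_minimum)
  let ?w = "\<lambda>C. if C \<in> C0 then 1 else 0 :: real"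
  note f = cover_feasible[OF C0_props(1) C0_props(3) C0_props(4)]
  show "(7::real) \<in> {\<Sum>C\<in>Cl. (w::nat set \<Rightarrow> real) C |w. (\<forall>C. 0 \<le> w C) \<and> (\<forall>v\<in>{1..12}. 1 \<le> (\<Sum>C\<in>{C. is_clique {1..12} Gstar_u_adj C \<and> v \<in> C}. w C))}"
    using f C0_props(2) by (intro CollectI exI[of _ ?w]) simp
next
  fix s assume "s \<in> {\<Sum>C\<in>Cl. (w::nat set \<Rightarrow> real) C |w. (\<forall>C. 0 \<le> w C) \<and> (\<forall>v\<in>{1..12}. 1 \<le> (\<Sum>C\<in>{C. is_clique {1..12} Gstar_u_adj C \<and> v \<in> C}. w C))}"
  then obtain w where "s = (\<Sum>C\<in>Cl. w C)" "\<forall>C. 0 \<le> w C" "\<forall>v\<in>{1..12::nat}. 1 \<le> (\<Sum>C\<in>{C. is_clique {1..12} Gstar_u_adj C \<and> v \<in> C}. w C)"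
    by blast
  then show "(7::real) \<le> s" using frac_lb by simp
qed

lemma ccn7: "clique_cover_number {1..12::nat} Gstar_u_adj = 7"
  unfolding clique_cover_number_def
proof (rule Least_equality)
  show "\<exists>\<C>. finite \<C> \<and> card \<C> = 7 \<and> (\<forall>C\<in>\<C>. is_clique {1..12} Gstar_u_adj C) \<and> \<Union>\<C> = {1..12::nat}"
    using C0_props by blast
next
  fix k assume "\<exists>\<C>. finite \<C> \<and> card \<C> = k \<and> (\<forall>C\<in>\<C>. is_clique {1..12} Gstar_u_adj C) \<and> \<Union>\<C> = {1..12::nat}"
  then obtain \<C> where c: "finite \<C>" "card \<C> = k" "\<forall>C\<in>\<C>. is_clique {1..12} Gstar_u_adj C" "\<Union>\<C> = {1..12::nat}"
    by blast
  note f = cover_feasible[OF c(1) c(3) c(4)]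
  have "7 \<le> real (card \<C>)" using frac_lb[OF f(1) f(2)] f(3) by simp
  then show "7 \<le> k" using c(2) by simp
qed

lemma beta7:
  assumes finA: "finite A" and cA: "card A \<ge> 2"
  shows "beta_star A 3 12 Wstar Kstar 1 = 7"
  unfolding beta_star_def
proof (rule cInf_eq_minimum)
  obtain E R D where ERD: "valid_index_code A 3 12 Wstar Kstar 1 7 E R D" "\<forall>i\<in>{1..3}. locality_at 1 Wstar R i \<le> 1"
    using upper[OF finA cA] by blast
  show "7 \<in> {real l / real m |m l E R D. 1 \<le> m \<and> valid_index_code A 3 12 Wstar Kstar m l E R D \<and> (\<forall>i\<in>{1..3}. locality_at m Wstar R i \<le> 1)}"
    using ERD by (intro CollectI exI[of _ 1] exI[of _ 7] exI[of _ E] exI[of _ R] exI[of _ D]) simp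
next
  fix s assume "s \<in> {real l / real m |m l E R D. 1 \<le> m \<and> valid_index_code A 3 12 Wstar Kstar m l E R D \<and> (\<forall>i\<in>{1..3}. locality_at m Wstar R i \<le> 1)}"
  then obtain m l E R D where s: "s = real l / real m" and m: "1 \<le> m"
    and v: "valid_index_code A 3 12 Wstar Kstar m l E R D" and loc: "\<forall>i\<in>{1..3}. locality_at m Wstar R i \<le> 1"
    by blast
  have "7 * m \<le> l" by (rule lower[OF finA cA m v loc])
  hence "7 * real m \<le> real l" by (metis of_nat_le_iff of_nat_mult of_nat_numeral)
  moreover have "0 < real m" using m by simp
  ultimately show "7 \<le> s" unfolding s by (simp add: le_divide_eq)
qed

theorem theorem5:
  fixes A :: "'a set"
  assumes "finite A" and "card A \<ge> 2"
  shows "beta_star A 3 12 Wstar Kstar 1 = frac_clique_cover_number {1..12::nat} Gstar_u_adj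
       \<and> frac_clique_cover_number {1..12::nat} Gstar_u_adj
           = real (clique_cover_number {1..12::nat} Gstar_u_adj)
       \<and> clique_cover_number {1..12::nat} Gstar_u_adj = 7"
  using beta7[OF assms] frac7 ccn7 by simp

end
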